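(* Let $l_1,l_2,l_3$ be affine functions on $\mathbb{F}_{p^r}$ with $l_1$ and $l_2$ permutations, write $l_2(x)=L_2(x)+c_2$ with $L_2$ additive, and let $d(x)$ be a Dembowski–Ostrom polynomial over $\mathbb{F}_{p^r}$. If $A(x)$ is an Alltop polynomial on $\mathbb{F}_{p^r}$ and $A'(x)=l_1(A(l_2(x)))+d(x)+l_3(x)$, then $A'(x)$ is an Alltop polynomial, and for every $a\in\mathbb{F}_{p^r}^*$ there exists $b\in\mathbb{F}_{p^r}^*$ (namely $b$ with $L_2(b)=a$) such that $\Delta_{A,a}(x)$ is EA-equivalent to $\Delta_{A',b}(x)$.
   Context: For $f:\mathbb{F}_{p^r}\to\mathbb{F}_{p^r}$ and $a\in\mathbb{F}_{p^r}$, $\Delta_{f,a}(x)=f(x+a)-f(x)$. A function $f$ is planar if for every $a\in\mathbb{F}_{p^r}^*$ the map $x\mapsto\Delta_{f,a}(x)$ is a bijection; $A$ is an Alltop polynomial if $\Delta_{A,a}$ is planar for every $a\in\mathbb{F}_{p^r}^*$. A function $L$ is additive if $L(x+y)=L(x)+L(y)$; an affine function is an additive function plus a constant. A Dembowski–Ostrom polynomial is one of the form $\sum_{i,j=0}^{r-1}a_{ij}x^{p^i+p^j}$, $a_{ij}\in\mathbb{F}_{p^r}$. Two functions $f_1,f_2$ are EA-equivalent if there exist affine $m_1,m_2,m_3$ with $m_1,m_2$ permutations such that $f_1=m_1\circ f_2\circ m_2+m_3$. *)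

theory Defs
  imports Main "HOL-Computational_Algebra.Primes" "HOL-Library.Cardinality"
begin

text \<open>The finite field F_{p^r} is modelled as a type 'a of class field and finite
  with CARD('a) = p^r, p prime.\<close>

definition delta :: "('a::ab_group_add \<Rightarrow> 'a) \<Rightarrow> 'a \<Rightarrow> 'a \<Rightarrow> 'a" where
  "delta f a = (\<lambda>x. f (x + a) - f x)"

definition planar :: "('a::ab_group_add \<Rightarrow> 'a) \<Rightarrow> bool" where
  "planar f \<longleftrightarrow> (\<forall>a. a \<noteq> 0 \<longrightarrow> bij (delta f a))"

definition alltop :: "('a::ab_group_add \<Rightarrow> 'a) \<Rightarrow> bool" where
  "alltop A \<longleftrightarrow> (\<forall>a. a \<noteq> 0 \<longrightarrow> planar (delta A a))"

definition additive :: "('a::plus \<Rightarrow> 'a) \<Rightarrow> bool" where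
  "additive L \<longleftrightarrow> (\<forall>x y. L (x + y) = L x + L y)"

definition affine_fun :: "('a::plus \<Rightarrow> 'a) \<Rightarrow> bool" where
  "affine_fun m \<longleftrightarrow> (\<exists>L c. additive L \<and> m = (\<lambda>x. L x + c))"

definition DO_poly :: "nat \<Rightarrow> nat \<Rightarrow> ('a::comm_ring_1 \<Rightarrow> 'a) \<Rightarrow> bool" where
  "DO_poly p r d \<longleftrightarrow> (\<exists>coef :: nat \<Rightarrow> nat \<Rightarrow> 'a.
      d = (\<lambda>x. \<Sum>i<r. \<Sum>j<r. coef i j * x ^ (p ^ i + p ^ j)))"

definition EA_equiv :: "('a::plus \<Rightarrow> 'a) \<Rightarrow> ('a \<Rightarrow> 'a) \<Rightarrow> bool" where
  "EA_equiv f1 f2 \<longleftrightarrow> (\<exists>m1 m2 m3. affine_fun m1 \<and> affine_fun m2 \<and> affine_fun m3 \<and>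
      bij m1 \<and> bij m2 \<and> f1 = (\<lambda>x. m1 (f2 (m2 x)) + m3 x))"

end

theory Submission
  imports Defs "HOL-Computational_Algebra.Primes"
begin

lemma card_zero: "of_nat CARD('a::{field,finite}) = (0::'a)"
proof -
  have "(\<Sum>x\<in>UNIV. x) = (\<Sum>x\<in>UNIV. (x::'a) + 1)"
  proof -
    have "(\<Sum>x\<in>UNIV. (x::'a) + 1) = sum (\<lambda>x. x) ((\<lambda>x. x + 1) ` UNIV)"
      by (subst sum.reindex) (auto simp: inj_def)
    also have "(\<lambda>x::'a. x + 1) ` UNIV = UNIV"
      by (auto intro!: image_eqI[where x="_ - 1"])
    finally show ?thesis by simp
  qed
  then show ?thesis by (simp add: sum.distrib)
qed

lemma char_eq:
  assumes "prime p" and "CARD('a::{field,finite}) = p ^ r"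
  shows "CHAR('a) = p"
proof -
  have pc: "prime CHAR('a)"
    using prime_CHAR_semidom[where ?'a='a] finite_imp_CHAR_pos[where ?'a='a] by auto
  have "CHAR('a) dvd p ^ r" using card_zero[where ?'a='a] assms(2) of_nat_eq_0_iff_char_dvd by metis
  then have "CHAR('a) dvd p" using pc prime_dvd_power by blast
  then show ?thesis using pc assms(1) primes_dvd_imp_eq by blast
qed

lemma frob_add:
  assumes "prime p" and "CARD('a::{field,finite}) = p ^ r"
  shows "(x + y :: 'a) ^ (p ^ i) = x ^ (p ^ i) + y ^ (p ^ i)"
  using freshmans_dream'[of "p ^ i" i x y] char_eq[OF assms] assms(1) by simp

lemma additive_0: "additive L \<Longrightarrow> L (0::'a::ab_group_add) = 0"
  unfolding additive_def by (metis add.right_neutral add_left_imp_eq)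

lemma additive_diff: "additive L \<Longrightarrow> L ((x::'a::ab_group_add) - y) = L x - L y"
  unfolding additive_def by (metis add_diff_cancel eq_diff_eq)

lemma additive_minus: "additive L \<Longrightarrow> L (- (x::'a::ab_group_add)) = - L x"
  using additive_diff[of L 0 x] additive_0[of L] by simp

lemma additive_inv:
  assumes "additive L" "bij (L::'a::ab_group_add \<Rightarrow> 'a)"
  shows "additive (inv L)"
  unfolding additive_def
proof (intro allI)
  fix x y
  have "L (inv L x + inv L y) = x + y"
    using assms unfolding additive_def by (simp add: bij_is_surj surj_f_inv_f)
  then show "inv L (x + y) = inv L x + inv L y"
    using assms(2) by (metis bij_inv_eq_iff)
qed

lemma bij_lin:
  assumes "bij (\<lambda>x. L x + (c::'a::ab_group_add))"
  shows "bij L"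
proof -
  have "L = (\<lambda>z. z - c) \<circ> (\<lambda>x. L x + c)" by auto
  moreover have "bij (\<lambda>z::'a. z - c)"
    by (rule o_bij[where g="\<lambda>z. z + c"]) auto
  ultimately show ?thesis using assms bij_comp by metis
qed

lemma affine_comp:
  assumes "affine_fun f" "affine_fun (g::'a::ab_group_add\<Rightarrow>'a)"
  shows "affine_fun (f \<circ> g)"
proof -
  obtain L c where f: "additive L" "f = (\<lambda>x. L x + c)" using assms(1) affine_fun_def by blast
  obtain M e where g: "additive M" "g = (\<lambda>x. M x + e)" using assms(2) affine_fun_def by blast
  have "f \<circ> g = (\<lambda>x. L (M x) + (L e + c))"
    using f g by (auto simp: additive_def)
  moreover have "additive (\<lambda>x. L (M x))" using f g by (simp add: additive_def)
  ultimately show ?thesis unfolding affine_fun_def by blast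
qed

lemma affine_I: "additive L \<Longrightarrow> affine_fun (\<lambda>x. L x + c)"
  unfolding affine_fun_def by blast

lemma delta_DO:
  assumes "prime p" and "CARD('a::{field,finite}) = p ^ r" and "DO_poly p r (d::'a\<Rightarrow>'a)"
  shows "\<exists>M e. additive M \<and> delta d b = (\<lambda>x. M x + e)"
proof -
  obtain coef where d: "d = (\<lambda>x. \<Sum>i<r. \<Sum>j<r. coef i j * x ^ (p ^ i + p ^ j))"
    using assms(3) DO_poly_def by blast
  define M where "M = (\<lambda>x. \<Sum>i<r. \<Sum>j<r. coef i j * (x ^ (p ^ i) * b ^ (p ^ j) + b ^ (p ^ i) * x ^ (p ^ j)))"
  define e where "e = (\<Sum>i<r. \<Sum>j<r. coef i j * (b ^ (p ^ i) * b ^ (p ^ j)))"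
  have fr: "\<And>x y :: 'a. \<And>i. (x + y) ^ (p ^ i) = x ^ (p ^ i) + y ^ (p ^ i)"
    using frob_add[OF assms(1,2)] by blast
  have "additive M"
    unfolding additive_def M_def
    by (simp add: fr algebra_simps sum.distrib)
  moreover have "delta d b = (\<lambda>x. M x + e)"
    unfolding delta_def d M_def e_def fun_eq_iff
    by (simp add: power_add fr algebra_simps sum.distrib flip: sum_subtractf)
  ultimately show ?thesis by blast
qed


lemma delta_Ap:
  assumes "additive L1" "additive L2" "additive L3"
    and "delta d b = (\<lambda>x. M x + e)"
  shows "delta (\<lambda>x. (L1 (A (L2 x + c2)) + c1) + d x + (L3 x + (c3::'a::ab_group_add))) b
       = (\<lambda>x. L1 (delta A (L2 b) (L2 x + c2)) + M x + e + L3 b)"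
proof
  fix x
  have "d (x + b) - d x = M x + e" using assms(4) unfolding delta_def by meson
  moreover have "L1 (A (L2 (x + b) + c2)) - L1 (A (L2 x + c2)) = L1 (delta A (L2 b) (L2 x + c2))"
    using assms(1,2) additive_diff[OF assms(1)] unfolding delta_def additive_def
    by (simp add: algebra_simps)
  moreover have "L3 (x + b) = L3 x + L3 b" using assms(3) additive_def by blast
  ultimately show "delta (\<lambda>x. (L1 (A (L2 x + c2)) + c1) + d x + (L3 x + c3)) b x
       = L1 (delta A (L2 b) (L2 x + c2)) + M x + e + L3 b"
    unfolding delta_def by (simp add: algebra_simps)
qed

theorem lemma5:
  fixes p r :: nat
    and l1 l2 l3 L2 d A :: "'a::{field,finite} \<Rightarrow> 'a"
    and c2 :: 'a
  assumes "prime p" and "CARD('a) = p ^ r"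
    and "affine_fun l1" and "affine_fun l2" and "affine_fun l3"
    and "bij l1" and "bij l2"
    and "additive L2" and "l2 = (\<lambda>x. L2 x + c2)"
    and "DO_poly p r d"
    and "alltop A"
  shows "alltop (\<lambda>x. l1 (A (l2 x)) + d x + l3 x) \<and>
    (\<forall>a. a \<noteq> 0 \<longrightarrow> (\<exists>b. b \<noteq> 0 \<and> L2 b = a \<and>
       EA_equiv (delta A a) (delta (\<lambda>x. l1 (A (l2 x)) + d x + l3 x) b)))"
proof -
  obtain L1 c1 where l1: "additive L1" "l1 = (\<lambda>x. L1 x + c1)"
    using assms(3) affine_fun_def by blast
  obtain L3 c3 where l3: "additive L3" "l3 = (\<lambda>x. L3 x + c3)"
    using assms(5) affine_fun_def by blast
  have bL1: "bij L1" using assms(6) l1 bij_lin by blast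
  have bL2: "bij L2" using assms(7) assms(9) bij_lin by blast
  define A' where "A' = (\<lambda>x. l1 (A (l2 x)) + d x + l3 x)"
  have A'eq: "A' = (\<lambda>x. (L1 (A (L2 x + c2)) + c1) + d x + (L3 x + c3))"
    unfolding A'_def l1 l3 assms(9) by simp
  have dd: "\<And>b. \<exists>M e. additive M \<and> delta d b = (\<lambda>x. M x + e)"
    using delta_DO[OF assms(1,2,10)] by blast
  have L20: "\<And>x. L2 x = 0 \<longleftrightarrow> x = 0"
    using bL2 additive_0[OF assms(8)] by (metis bij_is_inj inj_eq)
  have part1: "alltop A'"
    unfolding alltop_def planar_def
  proof (intro allI impI)
    fix a c :: 'a assume a: "a \<noteq> 0" and c: "c \<noteq> 0"
    obtain M e where M: "additive M" "delta d a = (\<lambda>x. M x + e)" using dd by blast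
    have da: "delta A' a = (\<lambda>x. L1 (delta A (L2 a) (L2 x + c2)) + M x + e + L3 a)"
      unfolding A'eq by (rule delta_Ap[OF l1(1) assms(8) l3(1) M(2)])
    have "delta (delta A' a) c = (\<lambda>z. L1 z + M c) \<circ> delta (delta A (L2 a)) (L2 c) \<circ> l2"
    proof
      fix x
      have "L1 (delta A (L2 a) (L2 (x + c) + c2)) - L1 (delta A (L2 a) (L2 x + c2))
          = L1 (delta (delta A (L2 a)) (L2 c) (L2 x + c2))"
      proof -
        have "delta A (L2 a) (L2 (x + c) + c2) - delta A (L2 a) (L2 x + c2)
           = delta (delta A (L2 a)) (L2 c) (L2 x + c2)"
          using assms(8) unfolding additive_def delta_def by (simp add: algebra_simps)
        then show ?thesis using additive_diff[OF l1(1)] by metis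
      qed
      moreover have "M (x + c) = M x + M c" using M(1) additive_def by blast
      ultimately show "delta (delta A' a) c x = ((\<lambda>z. L1 z + M c) \<circ> delta (delta A (L2 a)) (L2 c) \<circ> l2) x"
        unfolding da assms(9) by (simp add: delta_def algebra_simps)
    qed
    moreover have "bij (\<lambda>z. L1 z + M c)"
    proof -
      have "(\<lambda>z. L1 z + M c) = (\<lambda>z. z + M c) \<circ> L1" by auto
      moreover have "bij (\<lambda>z::'a. z + M c)" by (rule o_bij[where g="\<lambda>z. z - M c"]) auto
      ultimately show ?thesis using bL1 bij_comp by metis
    qed
    moreover have "bij (delta (delta A (L2 a)) (L2 c))"
      using assms(11) a c L20 unfolding alltop_def planar_def by blast
    ultimately show "bij (delta (delta A' a) c)" using assms(7) bij_comp by metis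
  qed
  have part2: "\<forall>a. a \<noteq> 0 \<longrightarrow> (\<exists>b. b \<noteq> 0 \<and> L2 b = a \<and> EA_equiv (delta A a) (delta A' b))"
  proof (intro allI impI)
    fix a :: 'a assume a: "a \<noteq> 0"
    define b where "b = inv L2 a"
    have Lb: "L2 b = a" unfolding b_def using bL2 by (simp add: bij_is_surj surj_f_inv_f)
    have b0: "b \<noteq> 0" using Lb a L20 by blast
    obtain M e where M: "additive M" "delta d b = (\<lambda>x. M x + e)" using dd by blast
    have db: "delta A' b = (\<lambda>x. L1 (delta A a (l2 x)) + M x + e + L3 b)"
      unfolding A'eq delta_Ap[OF l1(1) assms(8) l3(1) M(2)] Lb assms(9) ..
    define m1 where "m1 = inv L1"
    define m2 where "m2 = inv l2"
    define m3 where "m3 = (\<lambda>y. - inv L1 (M (inv l2 y) + e + L3 b))"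
    have aI1: "additive (inv L1)" using additive_inv l1(1) bL1 by blast
    have aI2: "additive (inv L2)" using additive_inv assms(8) bL2 by blast
    have invl2: "inv l2 = (\<lambda>y. inv L2 y + (- inv L2 c2))"
    proof
      fix y
      have "l2 (inv L2 y + (- inv L2 c2)) = y"
      proof -
        have s: "\<And>z. L2 (inv L2 z) = z" using bL2 by (simp add: bij_is_surj surj_f_inv_f)
        have "L2 (inv L2 y + (- inv L2 c2)) = L2 (inv L2 y) + L2 (- inv L2 c2)"
          using assms(8) additive_def by blast
        also have "\<dots> = y - c2" using additive_minus[OF assms(8)] s by simp
        finally show ?thesis unfolding assms(9) by simp
      qed
      then show "inv l2 y = inv L2 y + (- inv L2 c2)"
        using assms(7) by (metis bij_inv_eq_iff)
    qed
    have am1: "affine_fun m1" unfolding m1_def using affine_I[OF aI1, of 0] by simp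
    have am2: "affine_fun m2" unfolding m2_def invl2 using affine_I[OF aI2] by blast
    have am3: "affine_fun m3"
    proof -
      have "m3 = (\<lambda>z. - inv L1 (z + e + L3 b)) \<circ> (\<lambda>x. M x + 0) \<circ> m2"
        unfolding m3_def m2_def by auto
      moreover have "affine_fun (\<lambda>z. - inv L1 (z + e + L3 b))"
      proof -
        have "(\<lambda>z. - inv L1 (z + e + L3 b)) = (\<lambda>z. (\<lambda>w. - inv L1 w) z + (- inv L1 (e + L3 b)))"
          using aI1 unfolding additive_def by (auto simp: add.assoc)
        moreover have "additive (\<lambda>w. - inv L1 w)" using aI1 unfolding additive_def by simp
        ultimately show ?thesis using affine_I by metis
      qed
      moreover have "affine_fun (\<lambda>x. M x + 0)" using affine_I[OF M(1)] by blast
      ultimately show ?thesis using affine_comp am2 by metis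
    qed
    have bm1: "bij m1" unfolding m1_def using bL1 bij_imp_bij_inv by blast
    have bm2: "bij m2" unfolding m2_def using assms(7) bij_imp_bij_inv by blast
    have eq: "delta A a = (\<lambda>x. m1 (delta A' b (m2 x)) + m3 x)"
    proof
      fix y
      have l2m2: "l2 (m2 y) = y" unfolding m2_def using assms(7) by (simp add: bij_is_surj surj_f_inv_f)
      have "m1 (delta A' b (m2 y)) = inv L1 (L1 (delta A a y)) + inv L1 (M (inv l2 y) + e + L3 b)"
        unfolding db l2m2 m1_def using aI1 unfolding additive_def m2_def
        by (simp add: add.assoc)
      also have "inv L1 (L1 (delta A a y)) = delta A a y" using bL1 by (simp add: bij_is_inj)
      finally show "delta A a y = m1 (delta A' b (m2 y)) + m3 y" unfolding m3_def by simp
    qed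
    show "\<exists>b. b \<noteq> 0 \<and> L2 b = a \<and> EA_equiv (delta A a) (delta A' b)"
      unfolding EA_equiv_def using b0 Lb am1 am2 am3 bm1 bm2 eq by blast
  qed
  show ?thesis using part1 part2 unfolding A'_def by blast
qed

end
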